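(* For every intuitionistic conditional nested sequent $\Gamma$: if $\Gamma$ is derivable in the nested calculus $\mathsf{N.IntCK}$, then its formula interpretation $i(\Gamma)$ is derivable in the Hilbert system $\mathsf{IntCK}$.
   Context: Language $\mathcal{L}$: formulas $\varphi ::= p \mid \bot \mid \varphi\wedge\varphi \mid \varphi\vee\varphi \mid \varphi\to\varphi \mid \varphi \mathrel{\Box\!\!\to} \varphi \mid \varphi \mathrel{\Diamond\!\!\to}\varphi$ ($p$ ranging over a countable set of atoms); $\neg\varphi:=\varphi\to\bot$, $\top:=\neg\bot$, $\varphi\leftrightarrow\psi := (\varphi\to\psi)\wedge(\psi\to\varphi)$. Hilbert system $\mathsf{IntCK}$: any axiomatisation of intuitionistic propositional logic in $\mathcal{L}$ with modus ponens, plus the rules RA$_\Box$: from $\varphi\leftrightarrow\rho$ infer $(\varphi\mathrel{\Box\!\!\to}\psi)\leftrightarrow(\rho\mathrel{\Box\!\!\to}\psi)$; RC$_\Box$: from $\psi\leftrightarrow\chi$ infer $(\varphi\mathrel{\Box\!\!\to}\psi)\leftrightarrow(\varphi\mathrel{\Box\!\!\to}\chi)$; RA$_\Diamond$, RC$_\Diamond$: the same with $\mathrel{\Diamond\!\!\to}$; and axioms CM$_\Box$: $(\varphi\mathrel{\Box\!\!\to}\psi\wedge\chi)\to(\varphi\mathrel{\Box\!\!\to}\psi)\wedge(\varphi\mathrel{\Box\!\!\to}\chi)$; CC$_\Box$: $(\varphi\mathrel{\Box\!\!\to}\psi)\wedge(\varphi\mathrel{\Box\!\!\to}\chi)\to(\varphi\mathrel{\Box\!\!\to}\psi\wedge\chi)$;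 CN$_\Box$: $\varphi\mathrel{\Box\!\!\to}\top$; CM$_\Diamond$: $(\varphi\mathrel{\Diamond\!\!\to}\psi)\vee(\varphi\mathrel{\Diamond\!\!\to}\chi)\to(\varphi\mathrel{\Diamond\!\!\to}\psi\vee\chi)$; CC$_\Diamond$: $(\varphi\mathrel{\Diamond\!\!\to}\psi\vee\chi)\to(\varphi\mathrel{\Diamond\!\!\to}\psi)\vee(\varphi\mathrel{\Diamond\!\!\to}\chi)$; CN$_\Diamond$: $\neg(\varphi\mathrel{\Diamond\!\!\to}\bot)$; CW: $(\varphi\mathrel{\Diamond\!\!\to}\psi)\wedge(\varphi\mathrel{\Box\!\!\to}\chi)\to(\varphi\mathrel{\Diamond\!\!\to}\psi\wedge\chi)$; CFS: $((\varphi\mathrel{\Diamond\!\!\to}\psi)\to(\varphi\mathrel{\Box\!\!\to}\chi))\to(\varphi\mathrel{\Box\!\!\to}(\psi\to\chi))$. Nested sequents: each formula $\varphi$ gets an input polarity $\varphi^\bullet$ or output polarity $\varphi^\circ$. Input sequents $\Lambda ::= \emptyset \mid \Lambda,\varphi^\bullet \mid \Lambda,[\psi:\Lambda]$ and nested sequents $\Gamma ::= \Lambda,\varphi^\circ \mid \Lambda,[\psi:\Gamma]$, where the index $\psi$ of a component $[\psi:\cdot]$ is an unpolarised formula; thus a nested sequent contains exactly one output formula (commas are treated as associative and commutative, as usual). Formula interpretation: $i(\emptyset)=\top$; $i(\Lambda,\varphi^\bullet)=i(\Lambda)\wedge\varphi$; $i(\Lambda,[\psi:\Lambda'])=i(\Lambda)\wedge(\psi\mathrel{\Diamond\!\!\to}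 i(\Lambda'))$; $i(\Lambda,\varphi^\circ)=i(\Lambda)\to\varphi$; $i(\Lambda,[\psi:\Gamma])=i(\Lambda)\to(\psi\mathrel{\Box\!\!\to} i(\Gamma))$. A context $\Gamma\{\ \}$ is a (nested or input) sequent with one hole $\{\ \}$ (possibly inside nested components), to be filled with a sequent; rules are applied only when premisses and conclusion are nested sequents. $\Gamma^{\downarrow}\{\ \}$ denotes $\Gamma\{\ \}$ with its output formula removed. Rules of $\mathsf{N.IntCK}$ (premisses / conclusion): init: $\Gamma\{p^\bullet,p^\circ\}$ (no premiss, $p$ atom); $\bot^\bullet$: $\Gamma\{\bot^\bullet\}$ (no premiss); $\wedge^\bullet$: $\Gamma\{\varphi^\bullet,\psi^\bullet\}$ / $\Gamma\{(\varphi\wedge\psi)^\bullet\}$; $\wedge^\circ$: $\Gamma\{\varphi^\circ\}$, $\Gamma\{\psi^\circ\}$ / $\Gamma\{(\varphi\wedge\psi)^\circ\}$; $\vee^\bullet$: $\Gamma\{\varphi^\bullet\}$, $\Gamma\{\psi^\bullet\}$ / $\Gamma\{(\varphi\vee\psi)^\bullet\}$; $\vee^\circ$: $\Gamma\{\varphi^\circ\}$ / $\Gamma\{(\varphi\vee\psi)^\circ\}$ and $\Gamma\{\psi^\circ\}$ / $\Gamma\{(\varphi\vee\psi)^\circ\}$; $\to^\bullet$: $\Gamma^\downarrow\{(\varphi\to\psi)^\bullet,\varphi^\circ\}$, $\Gamma\{\psi^\bullet\}$ / $\Gamma\{(\varphi\to\psi)^\bullet\}$; $\to^\circ$: $\Gamma\{\varphi^\bullet,\psi^\circ\}$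 / $\Gamma\{(\varphi\to\psi)^\circ\}$; $\Box^\bullet$: $\varphi^\bullet,\eta^\circ$ and $\eta^\bullet,\varphi^\circ$ and $\Gamma\{(\varphi\mathrel{\Box\!\!\to}\psi)^\bullet,[\eta:\psi^\bullet,\Delta]\}$ / $\Gamma\{(\varphi\mathrel{\Box\!\!\to}\psi)^\bullet,[\eta:\Delta]\}$; $\Box^\circ$: $\Gamma\{[\varphi:\psi^\circ]\}$ / $\Gamma\{(\varphi\mathrel{\Box\!\!\to}\psi)^\circ\}$; $\Diamond^\bullet$: $\Gamma\{[\varphi:\psi^\bullet]\}$ / $\Gamma\{(\varphi\mathrel{\Diamond\!\!\to}\psi)^\bullet\}$; $\Diamond^\circ$: $\varphi^\bullet,\eta^\circ$ and $\eta^\bullet,\varphi^\circ$ and $\Gamma\{[\eta:\psi^\circ,\Delta]\}$ / $\Gamma\{(\varphi\mathrel{\Diamond\!\!\to}\psi)^\circ,[\eta:\Delta]\}$. A derivation is a finite tree of rule instances whose leaves are instances of init or $\bot^\bullet$. *)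

theory Defs
  imports Main "HOL-Library.Multiset"
begin

datatype form =
    Atom nat
  | Bot
  | And form form
  | Or form form
  | Imp form form
  | CBox form form
  | CDia form form

definition Neg :: "form \<Rightarrow> form" where "Neg \<phi> = Imp \<phi> Bot"
definition Top :: form where "Top = Neg Bot"
definition Iff :: "form \<Rightarrow> form \<Rightarrow> form" where
  "Iff \<phi> \<psi> = And (Imp \<phi> \<psi>) (Imp \<psi> \<phi>)"

inductive IntCK :: "form \<Rightarrow> bool" where
  ax_K:   "IntCK (Imp A (Imp B A))"
| ax_S:   "IntCK (Imp (Imp A (Imp B C)) (Imp (Imp A B) (Imp A C)))"
| ax_AndE1: "IntCK (Imp (And A B) A)"
| ax_AndE2: "IntCK (Imp (And A B) B)"
| ax_AndI: "IntCK (Imp A (Imp B (And A B)))"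
| ax_OrI1: "IntCK (Imp A (Or A B))"
| ax_OrI2: "IntCK (Imp B (Or A B))"
| ax_OrE: "IntCK (Imp (Imp A C) (Imp (Imp B C) (Imp (Or A B) C)))"
| ax_EFQ: "IntCK (Imp Bot A)"
| MP: "IntCK (Imp A B) \<Longrightarrow> IntCK A \<Longrightarrow> IntCK B"
| RA_Box: "IntCK (Iff \<phi> \<rho>) \<Longrightarrow> IntCK (Iff (CBox \<phi> \<psi>) (CBox \<rho> \<psi>))"
| RC_Box: "IntCK (Iff \<psi> \<chi>) \<Longrightarrow> IntCK (Iff (CBox \<phi> \<psi>) (CBox \<phi> \<chi>))"
| RA_Dia: "IntCK (Iff \<phi> \<rho>) \<Longrightarrow> IntCK (Iff (CDia \<phi> \<psi>) (CDia \<rho> \<psi>))"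
| RC_Dia: "IntCK (Iff \<psi> \<chi>) \<Longrightarrow> IntCK (Iff (CDia \<phi> \<psi>) (CDia \<phi> \<chi>))"
| CM_Box: "IntCK (Imp (CBox \<phi> (And \<psi> \<chi>)) (And (CBox \<phi> \<psi>) (CBox \<phi> \<chi>)))"
| CC_Box: "IntCK (Imp (And (CBox \<phi> \<psi>) (CBox \<phi> \<chi>)) (CBox \<phi> (And \<psi> \<chi>)))"
| CN_Box: "IntCK (CBox \<phi> Top)"
| CM_Dia: "IntCK (Imp (Or (CDia \<phi> \<psi>) (CDia \<phi> \<chi>)) (CDia \<phi> (Or \<psi> \<chi>)))"
| CC_Dia: "IntCK (Imp (CDia \<phi> (Or \<psi> \<chi>)) (Or (CDia \<phi> \<psi>) (CDia \<phi> \<chi>)))"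
| CN_Dia: "IntCK (Neg (CDia \<phi> Bot))"
| CW: "IntCK (Imp (And (CDia \<phi> \<psi>) (CBox \<phi> \<chi>)) (CDia \<phi> (And \<psi> \<chi>)))"
| CFS: "IntCK (Imp (Imp (CDia \<phi> \<psi>) (CBox \<phi> \<chi>)) (CBox \<phi> (Imp \<psi> \<chi>)))"

text \<open>Commas are associative and commutative:
 this is realised by the structural rule \<open>exch\<close> below, which permutes the
 items at any nesting depth.\<close>

datatype item =
    In form
  | Out form
  | Comp form "item list"

type_synonym seq = "item list"

fun outs :: "item \<Rightarrow> nat" where
  "outs (In \<phi>) = 0"
| "outs (Out \<phi>) = 1"
| "outs (Comp \<psi> ys) = sum_list (map outs ys)"

definition seq_outs :: "seq \<Rightarrow> nat" where
  "seq_outs xs = sum_list (map outs xs)"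

definition input_seq :: "seq \<Rightarrow> bool" where "input_seq xs \<longleftrightarrow> seq_outs xs = 0"
definition nested_seq :: "seq \<Rightarrow> bool" where "nested_seq xs \<longleftrightarrow> seq_outs xs = 1"

text \<open>Convention: the list \<open>x # xs\<close> stands for the sequent \<open>xs, x\<close>.\<close>

fun iin :: "seq \<Rightarrow> form" and iitem :: "item \<Rightarrow> form" where
  "iin [] = Top"
| "iin (x # xs) = And (iin xs) (iitem x)"
| "iitem (In \<phi>) = \<phi>"
| "iitem (Out \<phi>) = Bot"
| "iitem (Comp \<psi> ys) = CDia \<psi> (iin ys)"

lemma size_list_mem_less: "x \<in> set xs \<Longrightarrow> f x < size_list f xs"
  by (induction xs) auto

function (sequential) nint :: "seq \<Rightarrow> form" and oint :: "item \<Rightarrow> form" where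
  "nint xs = (case find (\<lambda>x. outs x \<noteq> 0) xs of
                None \<Rightarrow> Bot
              | Some x \<Rightarrow> Imp (iin (filter (\<lambda>x. outs x = 0) xs)) (oint x))"
| "oint (Out \<phi>) = \<phi>"
| "oint (Comp \<psi> ys) = CBox \<psi> (nint ys)"
| "oint (In \<phi>) = Bot"
  by pat_completeness auto
termination
  apply (relation "measure (case_sum (size_list size) size)")
  apply simp_all
  apply (metis find_Some_iff nth_mem size_list_mem_less)
  done

text \<open>The interpretation i(\<Gamma>): for a nested sequent \<Lambda>, O (O the unique item
 carrying the output formula) it is i(\<Lambda>) \<rightarrow> o(O), where o(\<phi> output) = \<phi> and
 o([\<psi>:\<Gamma>']) = \<psi> box-arrow i(\<Gamma>').\<close>
definition interp :: "seq \<Rightarrow> form" where "interp \<Gamma> = nint \<Gamma>"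

datatype ctx =
    Hole seq
  | CComp seq form ctx

fun fill :: "ctx \<Rightarrow> seq \<Rightarrow> seq" where
  "fill (Hole xs) D = D @ xs"
| "fill (CComp xs \<psi> C) D = Comp \<psi> (fill C D) # xs"

fun strip :: "seq \<Rightarrow> seq" and strip_item :: "item \<Rightarrow> seq" where
  "strip [] = []"
| "strip (x # xs) = strip_item x @ strip xs"
| "strip_item (In \<phi>) = [In \<phi>]"
| "strip_item (Out \<phi>) = []"
| "strip_item (Comp \<psi> ys) = [Comp \<psi> (strip ys)]"

fun down :: "ctx \<Rightarrow> ctx" where
  "down (Hole xs) = Hole (strip xs)"
| "down (CComp xs \<psi> C) = CComp (strip xs) \<psi> (down C)"

inductive derivable :: "seq \<Rightarrow> bool" where
  exch: "derivable (fill C xs) \<Longrightarrow> mset xs = mset ys \<Longrightarrow> nested_seq (fill C ys)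
         \<Longrightarrow> derivable (fill C ys)"
| init: "nested_seq (fill C [In (Atom p), Out (Atom p)]) \<Longrightarrow>
         derivable (fill C [In (Atom p), Out (Atom p)])"
| botL: "nested_seq (fill C [In Bot]) \<Longrightarrow> derivable (fill C [In Bot])"
| andL: "derivable (fill C [In \<phi>, In \<psi>]) \<Longrightarrow> nested_seq (fill C [In (And \<phi> \<psi>)]) \<Longrightarrow>
         derivable (fill C [In (And \<phi> \<psi>)])"
| andR: "derivable (fill C [Out \<phi>]) \<Longrightarrow> derivable (fill C [Out \<psi>]) \<Longrightarrow>
         nested_seq (fill C [Out (And \<phi> \<psi>)]) \<Longrightarrow> derivable (fill C [Out (And \<phi> \<psi>)])"
| orL: "derivable (fill C [In \<phi>]) \<Longrightarrow> derivable (fill C [In \<psi>]) \<Longrightarrow>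
         nested_seq (fill C [In (Or \<phi> \<psi>)]) \<Longrightarrow> derivable (fill C [In (Or \<phi> \<psi>)])"
| orR1: "derivable (fill C [Out \<phi>]) \<Longrightarrow> nested_seq (fill C [Out (Or \<phi> \<psi>)]) \<Longrightarrow>
         derivable (fill C [Out (Or \<phi> \<psi>)])"
| orR2: "derivable (fill C [Out \<psi>]) \<Longrightarrow> nested_seq (fill C [Out (Or \<phi> \<psi>)]) \<Longrightarrow>
         derivable (fill C [Out (Or \<phi> \<psi>)])"
| impL: "derivable (fill (down C) [In (Imp \<phi> \<psi>), Out \<phi>]) \<Longrightarrow> derivable (fill C [In \<psi>]) \<Longrightarrow>
         nested_seq (fill C [In (Imp \<phi> \<psi>)]) \<Longrightarrow> derivable (fill C [In (Imp \<phi> \<psi>)])"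
| impR: "derivable (fill C [In \<phi>, Out \<psi>]) \<Longrightarrow> nested_seq (fill C [Out (Imp \<phi> \<psi>)]) \<Longrightarrow>
         derivable (fill C [Out (Imp \<phi> \<psi>)])"
| boxL: "derivable [In \<phi>, Out \<eta>] \<Longrightarrow> derivable [In \<eta>, Out \<phi>] \<Longrightarrow>
         derivable (fill C [In (CBox \<phi> \<psi>), Comp \<eta> (In \<psi> # \<Delta>)]) \<Longrightarrow>
         nested_seq (fill C [In (CBox \<phi> \<psi>), Comp \<eta> \<Delta>]) \<Longrightarrow>
         derivable (fill C [In (CBox \<phi> \<psi>), Comp \<eta> \<Delta>])"
| boxR: "derivable (fill C [Comp \<phi> [Out \<psi>]]) \<Longrightarrow> nested_seq (fill C [Out (CBox \<phi> \<psi>)]) \<Longrightarrow>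
         derivable (fill C [Out (CBox \<phi> \<psi>)])"
| diaL: "derivable (fill C [Comp \<phi> [In \<psi>]]) \<Longrightarrow> nested_seq (fill C [In (CDia \<phi> \<psi>)]) \<Longrightarrow>
         derivable (fill C [In (CDia \<phi> \<psi>)])"
| diaR: "derivable [In \<phi>, Out \<eta>] \<Longrightarrow> derivable [In \<eta>, Out \<phi>] \<Longrightarrow>
         derivable (fill C [Comp \<eta> (Out \<psi> # \<Delta>)]) \<Longrightarrow>
         nested_seq (fill C [Out (CDia \<phi> \<psi>), Comp \<eta> \<Delta>]) \<Longrightarrow>
         derivable (fill C [Out (CDia \<phi> \<psi>), Comp \<eta> \<Delta>])"

end

theory Submission
  imports Defs
begin

inductive ded :: "form set \<Rightarrow> form \<Rightarrow> bool" where
  dhyp: "A \<in> G \<Longrightarrow> ded G A"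
| dax: "IntCK A \<Longrightarrow> ded G A"
| dmp: "ded G (Imp A B) \<Longrightarrow> ded G A \<Longrightarrow> ded G B"

lemma ded_mono: "ded G A \<Longrightarrow> G \<subseteq> H \<Longrightarrow> ded H A"
  by (induction rule: ded.induct) (auto intro: ded.intros)

lemma ded_IntCK': "ded G A \<Longrightarrow> G = {} \<Longrightarrow> IntCK A"
  by (induction rule: ded.induct) (auto intro: IntCK.MP)

lemma ded_IntCK: "ded {} A \<Longrightarrow> IntCK A"
  using ded_IntCK' by blast

lemma imp_refl: "IntCK (Imp A A)"
proof -
  have 1: "IntCK (Imp (Imp A (Imp (Imp A A) A)) (Imp (Imp A (Imp A A)) (Imp A A)))" by (rule ax_S)
  have 2: "IntCK (Imp A (Imp (Imp A A) A))" by (rule ax_K)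
  have 3: "IntCK (Imp A (Imp A A))" by (rule ax_K)
  show ?thesis using IntCK.MP[OF IntCK.MP[OF 1 2] 3] .
qed

lemma deduction: "ded H B \<Longrightarrow> H = insert A G \<Longrightarrow> ded G (Imp A B)"
proof (induction rule: ded.induct)
  case (dhyp B H)
  then show ?case
  proof (cases "B = A")
    case True then show ?thesis using imp_refl ded.dax by simp
  next
    case False then have "B \<in> G" using dhyp by auto
    then show ?thesis using ded.dmp[OF ded.dax[OF ax_K] ded.dhyp] by metis
  qed
next
  case (dax B H)
  then show ?case using ded.dmp[OF ded.dax[OF ax_K] ded.dax] by metis
next
  case (dmp H B C)
  then show ?case using ded.dmp[OF ded.dmp[OF ded.dax[OF ax_S]]] by metis
qed

lemma dimpI: "ded (insert A G) B \<Longrightarrow> ded G (Imp A B)"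
  using deduction by blast

lemma dimpE: "ded G (Imp A B) \<Longrightarrow> ded G A \<Longrightarrow> ded G B"
  by (rule ded.dmp)

lemma hypI: "ded (insert A G) A" by (rule ded.dhyp) simp

lemma weak: "ded G A \<Longrightarrow> ded (insert B G) A"
  using ded_mono by blast

lemma thmI: "IntCK A \<Longrightarrow> ded G A" by (rule ded.dax)

lemma thm_app: "IntCK (Imp A B) \<Longrightarrow> ded G A \<Longrightarrow> ded G B"
  using ded.dmp ded.dax by blast

lemma thm_app2: "IntCK (Imp A (Imp B C)) \<Longrightarrow> ded G A \<Longrightarrow> ded G B \<Longrightarrow> ded G C"
  using ded.dmp ded.dax by blast

lemma dandI: "ded G A \<Longrightarrow> ded G B \<Longrightarrow> ded G (And A B)"
  using thm_app2[OF ax_AndI] .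

lemma dandD1: "ded G (And A B) \<Longrightarrow> ded G A"
  using thm_app[OF ax_AndE1] .

lemma dandD2: "ded G (And A B) \<Longrightarrow> ded G B"
  using thm_app[OF ax_AndE2] .

lemma and_iff: "ded G (And A B) \<longleftrightarrow> ded G A \<and> ded G B"
  using dandI dandD1 dandD2 by blast

lemma dorI1: "ded G A \<Longrightarrow> ded G (Or A B)"
  using thm_app[OF ax_OrI1] .

lemma dorI2: "ded G B \<Longrightarrow> ded G (Or A B)"
  using thm_app[OF ax_OrI2] .

lemma dorE: "ded G (Or A B) \<Longrightarrow> ded (insert A G) C \<Longrightarrow> ded (insert B G) C \<Longrightarrow> ded G C"
  using dimpE[OF dimpE[OF thm_app[OF ax_OrE dimpI] dimpI]] by blast

lemma dbotE: "ded G Bot \<Longrightarrow> ded G A"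
  using thm_app[OF ax_EFQ] .

lemma topI: "ded G Top"
  unfolding Top_def Neg_def using thmI[OF ax_EFQ] .

lemma diffI: "ded G (Imp A B) \<Longrightarrow> ded G (Imp B A) \<Longrightarrow> ded G (Iff A B)"
  unfolding Iff_def by (rule dandI)

lemma diffD1: "ded G (Iff A B) \<Longrightarrow> ded G (Imp A B)"
  unfolding Iff_def by (rule dandD1)

lemma diffD2: "ded G (Iff A B) \<Longrightarrow> ded G (Imp B A)"
  unfolding Iff_def by (rule dandD2)

lemma thm_iff: "IntCK A \<longleftrightarrow> ded {} A"
  using ded_IntCK thmI by blast

lemma imp_thm: "IntCK (Imp A B) \<longleftrightarrow> ded {A} B"
proof
  assume "IntCK (Imp A B)" then show "ded {A} B" using thm_app[OF _ hypI] by metis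
next
  assume "ded {A} B" then show "IntCK (Imp A B)" using ded_IntCK[OF dimpI] by metis
qed

lemma imp2_thm: "IntCK (Imp A (Imp B C)) \<longleftrightarrow> ded {B, A} C"
proof
  assume "IntCK (Imp A (Imp B C))" then show "ded {B, A} C"
    using thm_app2[OF _ weak[OF hypI] hypI] by metis
next
  assume "ded {B, A} C" then show "IntCK (Imp A (Imp B C))" using ded_IntCK[OF dimpI[OF dimpI]] by metis
qed


lemma imp_thmI: "ded {A} B \<Longrightarrow> IntCK (Imp A B)" using imp_thm by metis
lemma imp2_thmI: "ded {B, A} C \<Longrightarrow> IntCK (Imp A (Imp B C))" using imp2_thm by metis

lemma and_imp_thm: "IntCK (Imp P (Imp Q R)) \<Longrightarrow> IntCK (Imp (And P Q) R)"
proof -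
  assume h: "IntCK (Imp P (Imp Q R))"
  have "ded {And P Q} R"
    by (rule thm_app2[OF h dandD1[OF hypI] dandD2[OF hypI]])
  then show ?thesis by (rule imp_thmI)
qed

section \<open>Modal rules\<close>

lemma box_mono: "IntCK (Imp A B) \<Longrightarrow> IntCK (Imp (CBox \<phi> A) (CBox \<phi> B))"
proof -
  assume h: "IntCK (Imp A B)"
  have "ded {} (Iff A (And A B))"
    apply (rule diffI)
     apply (rule dimpI, rule dandI, rule hypI, rule thm_app[OF h hypI])
    apply (rule dimpI, rule dandD1, rule hypI)
    done
  then have "IntCK (Iff (CBox \<phi> A) (CBox \<phi> (And A B)))" by (rule RC_Box[OF ded_IntCK])
  then have "ded {CBox \<phi> A} (CBox \<phi> (And A B))" by (rule dimpE[OF diffD1[OF thmI] hypI])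
  then have "ded {CBox \<phi> A} (CBox \<phi> B)" by (rule dandD2[OF thm_app[OF CM_Box]])
  then show ?thesis by (rule imp_thmI)
qed

lemma box_nec: "IntCK A \<Longrightarrow> IntCK (CBox \<phi> A)"
proof -
  assume h: "IntCK A"
  have "ded {} (Iff Top A)"
    by (rule diffI, rule dimpI, rule thmI[OF h], rule dimpI, rule topI)
  then have "IntCK (Iff (CBox \<phi> Top) (CBox \<phi> A))" by (rule RC_Box[OF ded_IntCK])
  then have "ded {} (CBox \<phi> A)" by (rule dimpE[OF diffD1[OF thmI] thmI[OF CN_Box]])
  then show ?thesis by (rule ded_IntCK)
qed

lemma dia_mono: "IntCK (Imp A B) \<Longrightarrow> IntCK (Imp (CDia \<phi> A) (CDia \<phi> B))"
proof -
  assume h: "IntCK (Imp A B)"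
  have "ded {} (Iff (Or A B) B)"
    apply (rule diffI)
     apply (rule dimpI, rule dorE[OF hypI], rule thm_app[OF h hypI], rule hypI)
    apply (rule dimpI, rule dorI2, rule hypI)
    done
  then have 1: "IntCK (Iff (CDia \<phi> (Or A B)) (CDia \<phi> B))" by (rule RC_Dia[OF ded_IntCK])
  have "ded {CDia \<phi> A} (CDia \<phi> (Or A B))" by (rule thm_app[OF CM_Dia dorI1[OF hypI]])
  then have "ded {CDia \<phi> A} (CDia \<phi> B)" by (rule dimpE[OF diffD1[OF thmI[OF 1]]])
  then show ?thesis by (rule imp_thmI)
qed

lemma box2: "IntCK (Imp P (Imp Q R)) \<Longrightarrow> IntCK (Imp (CBox \<eta> P) (Imp (CBox \<eta> Q) (CBox \<eta> R)))"
proof -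
  assume h: "IntCK (Imp P (Imp Q R))"
  have 1: "IntCK (Imp (CBox \<eta> (And P Q)) (CBox \<eta> R))" by (rule box_mono[OF and_imp_thm[OF h]])
  have "ded {CBox \<eta> Q, CBox \<eta> P} (CBox \<eta> (And P Q))"
    by (rule thm_app[OF CC_Box dandI[OF weak[OF hypI] hypI]])
  then have "ded {CBox \<eta> Q, CBox \<eta> P} (CBox \<eta> R)" by (rule thm_app[OF 1])
  then show ?thesis by (rule imp2_thmI)
qed

lemma dia_box: "IntCK (Imp P (Imp Q R)) \<Longrightarrow> IntCK (Imp (CDia \<eta> P) (Imp (CBox \<eta> Q) (CDia \<eta> R)))"
proof -
  assume h: "IntCK (Imp P (Imp Q R))"
  have 1: "IntCK (Imp (CDia \<eta> (And P Q)) (CDia \<eta> R))" by (rule dia_mono[OF and_imp_thm[OF h]])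
  have "ded {CBox \<eta> Q, CDia \<eta> P} (CDia \<eta> (And P Q))"
    by (rule thm_app[OF CW dandI[OF weak[OF hypI] hypI]])
  then have "ded {CBox \<eta> Q, CDia \<eta> P} (CDia \<eta> R)" by (rule thm_app[OF 1])
  then show ?thesis by (rule imp2_thmI)
qed

lemma dia_or: "IntCK (Imp P (Or Q R)) \<Longrightarrow> IntCK (Imp (CDia \<eta> P) (Or (CDia \<eta> Q) (CDia \<eta> R)))"
proof -
  assume h: "IntCK (Imp P (Or Q R))"
  then have 1: "IntCK (Imp (CDia \<eta> P) (CDia \<eta> (Or Q R)))" by (rule dia_mono)
  have "ded {CDia \<eta> P} (Or (CDia \<eta> Q) (CDia \<eta> R))"
    by (rule thm_app[OF CC_Dia thm_app[OF 1 hypI]])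
  then show ?thesis by (rule imp_thmI)
qed

lemma dia_bot: "IntCK (Imp P Bot) \<Longrightarrow> IntCK (Imp (CDia \<eta> P) Bot)"
proof -
  assume h: "IntCK (Imp P Bot)"
  then have 1: "IntCK (Imp (CDia \<eta> P) (CDia \<eta> Bot))" by (rule dia_mono)
  have "ded {CDia \<eta> P} Bot"
    by (rule thm_app[OF CN_Dia[unfolded Neg_def] thm_app[OF 1 hypI]])
  then show ?thesis by (rule imp_thmI)
qed

lemma box_RA: "IntCK (Imp \<phi> \<eta>) \<Longrightarrow> IntCK (Imp \<eta> \<phi>) \<Longrightarrow> IntCK (Imp (CBox \<phi> \<psi>) (CBox \<eta> \<psi>))"
proof -
  assume a: "IntCK (Imp \<phi> \<eta>)" and b: "IntCK (Imp \<eta> \<phi>)"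
  have "IntCK (Iff \<phi> \<eta>)" by (rule ded_IntCK[OF diffI[OF thmI[OF a] thmI[OF b]]])
  then have "IntCK (Iff (CBox \<phi> \<psi>) (CBox \<eta> \<psi>))" by (rule RA_Box)
  then show ?thesis by (rule ded_IntCK[OF diffD1[OF thmI]])
qed

lemma dia_RA: "IntCK (Imp \<phi> \<eta>) \<Longrightarrow> IntCK (Imp \<eta> \<phi>) \<Longrightarrow> IntCK (Imp (CDia \<eta> \<psi>) (CDia \<phi> \<psi>))"
proof -
  assume a: "IntCK (Imp \<phi> \<eta>)" and b: "IntCK (Imp \<eta> \<phi>)"
  have "IntCK (Iff \<phi> \<eta>)" by (rule ded_IntCK[OF diffI[OF thmI[OF a] thmI[OF b]]])
  then have "IntCK (Iff (CDia \<phi> \<psi>) (CDia \<eta> \<psi>))" by (rule RA_Dia)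
  then show ?thesis by (rule ded_IntCK[OF diffD2[OF thmI]])
qed


abbreviation Z :: "item \<Rightarrow> bool" where "Z \<equiv> (\<lambda>x. outs x = 0)"
abbreviation NZ :: "item \<Rightarrow> bool" where "NZ \<equiv> (\<lambda>x. outs x \<noteq> 0)"

lemma seq_outs_simps[simp]:
  "seq_outs [] = 0" "seq_outs (x # xs) = outs x + seq_outs xs"
  "seq_outs (xs @ ys) = seq_outs xs + seq_outs ys"
  by (simp_all add: seq_outs_def)

lemma outs_Comp[simp]: "outs (Comp \<psi> ys) = seq_outs ys"
  by (simp add: seq_outs_def)

declare outs.simps(3)[simp del]

lemma seq_outs0: "seq_outs xs = 0 \<longleftrightarrow> (\<forall>x\<in>set xs. outs x = 0)"
  by (induction xs) auto

lemma fill_outs: "seq_outs (fill C D) = seq_outs (fill C []) + seq_outs D"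
  by (induction C) (auto simp: outs_Comp)

lemma find_append_None: "find P a = None \<Longrightarrow> find P (a @ b) = find P b"
  by (induction a) (auto split: if_splits)

lemma find_append_Some: "find P a = Some x \<Longrightarrow> find P (a @ b) = Some x"
  by (induction a) (auto split: if_splits)

lemma find_Some_mem: "find P xs = Some y \<Longrightarrow> y \<in> set xs \<and> P y"
  by (induction xs) (auto split: if_splits)

lemma strip_id:
  "(\<forall>x\<in>set xs. outs x = 0) \<Longrightarrow> strip xs = xs"
  "outs y = 0 \<Longrightarrow> strip_item y = [y]"
  by (induction xs and y rule: strip_strip_item.induct) (auto simp: outs_Comp seq_outs0)

lemma strip_outs:
  "seq_outs (strip xs) = 0"
  "seq_outs (strip_item y) = 0"
  by (induction xs and y rule: strip_strip_item.induct) (auto simp: outs_Comp)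

lemma down_id: "seq_outs (fill C []) = 0 \<Longrightarrow> down C = C"
  by (induction C) (auto simp: outs_Comp seq_outs0 strip_id)


lemma unique_out:
  "seq_outs xs = 1 \<Longrightarrow> \<exists>u\<in>set xs. outs u = 1 \<and> (\<forall>y\<in>set xs. y \<noteq> u \<longrightarrow> outs y = 0)"
proof (induction xs)
  case Nil then show ?case by simp
next
  case (Cons x xs)
  show ?case
  proof (cases "outs x = 0")
    case True
    then have "seq_outs xs = 1" using Cons.prems by simp
    then obtain u where u: "u \<in> set xs" "outs u = 1" "\<forall>y\<in>set xs. y \<noteq> u \<longrightarrow> outs y = 0"
      using Cons.IH by blast
    have "\<forall>y\<in>set (x # xs). y \<noteq> u \<longrightarrow> outs y = 0" using u(3) True by simp
    then show ?thesis using u(1,2) by (intro bexI[of _ u]) simp_all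
  next
    case False
    then have 1: "outs x = 1" "seq_outs xs = 0" using Cons.prems by auto
    then have "\<forall>y\<in>set xs. outs y = 0" using seq_outs0 by blast
    then have "\<forall>y\<in>set (x # xs). y \<noteq> x \<longrightarrow> outs y = 0" by simp
    then show ?thesis using 1 by (intro bexI[of _ x]) simp_all
  qed
qed

lemma nested_struct:
  assumes "seq_outs xs = 1"
  obtains u where "u \<in> set xs" "outs u = 1" "find NZ xs = Some u"
    "set (filter Z xs) = set xs - {u}"
    "interp xs = Imp (iin (filter Z xs)) (oint u)"
    "\<forall>y\<in>set xs. y \<noteq> u \<longrightarrow> outs y = 0"
proof -
  obtain u where u: "u \<in> set xs" "outs u = 1" "\<forall>y\<in>set xs. y \<noteq> u \<longrightarrow> outs y = 0"
    using unique_out[OF assms] by blast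
  have "find NZ xs \<noteq> None"
  proof
    assume "find NZ xs = None"
    then have "\<not> (\<exists>x. x \<in> set xs \<and> NZ x)" using find_None_iff[of NZ xs] by blast
    with u show False by auto
  qed
  then obtain y where y: "find NZ xs = Some y" by blast
  have "y \<in> set xs \<and> NZ y" by (rule find_Some_mem[OF y])
  then have yin: "y \<in> set xs" and ynz: "outs y \<noteq> 0" by (rule conjunct1, rule conjunct2)
  have "y = u"
  proof (rule ccontr)
    assume "y \<noteq> u"
    then have "outs y = 0" by (rule mp[OF bspec[OF u(3) yin]])
    then show False using ynz by (rule notE[rotated])
  qed
  then have f: "find NZ xs = Some u" using y by simp
  have s: "set (filter Z xs) = set xs - {u}" using u by auto
  have "interp xs = Imp (iin (filter Z xs)) (oint u)"
    unfolding interp_def by (subst nint.simps, simp only: f option.case)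
  then show ?thesis by (rule that[OF u(1,2) f s _ u(3)])
qed

lemma interp_find: "find NZ xs = Some u \<Longrightarrow> interp xs = Imp (iin (filter Z xs)) (oint u)"
  unfolding interp_def by (subst nint.simps, simp only: option.case)

lemma find_zero: "seq_outs E = 0 \<Longrightarrow> find NZ E = None"
proof -
  assume "seq_outs E = 0"
  then have "\<forall>x\<in>set E. outs x = 0" using seq_outs0 by blast
  then have "\<not> (\<exists>x. x \<in> set E \<and> outs x \<noteq> 0)" by auto
  then show ?thesis using find_None_iff[of NZ E] by blast
qed

lemma filter_zero: "seq_outs E = 0 \<Longrightarrow> filter Z E = E"
proof -
  assume "seq_outs E = 0"
  then have "\<forall>x\<in>set E. outs x = 0" using seq_outs0 by blast
  then show ?thesis by (simp add: filter_id_conv)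
qed

lemma interp_app_in:
  "seq_outs E = 0 \<Longrightarrow> find NZ xs = Some u \<Longrightarrow> interp (E @ xs) = Imp (iin (E @ filter Z xs)) (oint u)"
proof -
  assume a: "seq_outs E = 0" "find NZ xs = Some u"
  have "find NZ (E @ xs) = Some u" using find_append_None[OF find_zero[OF a(1)]] a(2) by simp
  from interp_find[OF this] show ?thesis using filter_zero[OF a(1)] by simp
qed

lemma interp_app_out:
  "find NZ D = Some u \<Longrightarrow> seq_outs xs = 0 \<Longrightarrow> interp (D @ xs) = Imp (iin (filter Z D @ xs)) (oint u)"
proof -
  assume a: "find NZ D = Some u" "seq_outs xs = 0"
  have "find NZ (D @ xs) = Some u" using find_append_Some[OF a(1)] by simp
  from interp_find[OF this] show ?thesis using filter_zero[OF a(2)] by simp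
qed

lemma interp_box:
  assumes "seq_outs xs = 0" "seq_outs F = 1"
  shows "interp (Comp \<eta> F # xs) = Imp (iin xs) (CBox \<eta> (interp F))"
proof -
  have "filter Z xs = xs" using assms seq_outs0 by (simp add: filter_id_conv)
  moreover have "find NZ (Comp \<eta> F # xs) = Some (Comp \<eta> F)" using assms by simp
  moreover have "filter Z (Comp \<eta> F # xs) = filter Z xs" using assms by simp
  ultimately show ?thesis unfolding interp_def
    by (subst nint.simps, simp only: option.case oint.simps)
qed

lemma iin_iff: "ded G (iin L) \<longleftrightarrow> (\<forall>x\<in>set L. ded G (iitem x))"
  by (induction L) (auto simp: and_iff topI)

lemma iin_sub: "set L \<subseteq> set L' \<Longrightarrow> ded G (iin L') \<Longrightarrow> ded G (iin L)"
  using iin_iff by blast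

lemma iin_append: "ded G (iin (a @ b)) \<longleftrightarrow> ded G (iin a) \<and> ded G (iin b)"
  using iin_iff by auto


lemma iin_intro: "(\<And>x. x \<in> set L \<Longrightarrow> ded G (iitem x)) \<Longrightarrow> ded G (iin L)"
  using iin_iff by blast

lemma iin_elim: "ded G (iin L) \<Longrightarrow> x \<in> set L \<Longrightarrow> ded G (iitem x)"
  using iin_iff by blast

lemma hypm: "A \<in> G \<Longrightarrow> ded G A" by (rule ded.dhyp)

lemma iin_curry:
  assumes "set L \<subseteq> set a \<union> set b"
  shows "IntCK (Imp (Imp (iin L) Ob) (Imp (iin a) (Imp (iin b) Ob)))"
proof -
  let ?G = "{iin b, iin a, Imp (iin L) Ob}"
  have "ded ?G (iin L)"
  proof (rule iin_intro)
    fix x assume "x \<in> set L"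
    then have "x \<in> set a \<or> x \<in> set b" using assms by blast
    then show "ded ?G (iitem x)"
    proof
      assume h: "x \<in> set a" show ?thesis by (rule iin_elim[where L=a, OF hypm]) (simp, fact h)
    next
      assume h: "x \<in> set b" show ?thesis by (rule iin_elim[where L=b, OF hypm]) (simp, fact h)
    qed
  qed
  then have "ded ?G Ob" by (rule dimpE[OF hypm, rotated]) simp
  then show ?thesis by (intro ded_IntCK dimpI)
qed

lemma iin_uncurry:
  assumes "set a \<union> set b \<subseteq> set L"
  shows "IntCK (Imp (Imp (iin a) (Imp (iin b) Ob)) (Imp (iin L) Ob))"
proof -
  let ?G = "{iin L, Imp (iin a) (Imp (iin b) Ob)}"
  have 1: "ded ?G (iin a)"
    by (rule iin_intro, rule iin_elim[where L=L, OF hypm], simp, use assms in blast)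
  have 2: "ded ?G (iin b)"
    by (rule iin_intro, rule iin_elim[where L=L, OF hypm], simp, use assms in blast)
  have "ded ?G Ob" by (rule dimpE[OF dimpE[OF hypm 1] 2]) simp
  then show ?thesis by (intro ded_IntCK dimpI)
qed

lemma iin_imp_sub: "set L \<subseteq> set L' \<Longrightarrow> IntCK (Imp (iin L') (iin L))"
  by (rule imp_thmI, rule iin_intro, rule iin_elim[where L=L', OF hypm], simp, blast)

lemma hole_in:
  assumes "seq_outs E = 0" "seq_outs xs = 1"
  shows "IntCK (Imp (interp (E @ xs)) (Imp (iin E) (interp xs)))"
    and "IntCK (Imp (Imp (iin E) (interp xs)) (interp (E @ xs)))"
proof -
  obtain u where u: "u \<in> set xs" "outs u = 1" "find NZ xs = Some u"
    "set (filter Z xs) = set xs - {u}" "interp xs = Imp (iin (filter Z xs)) (oint u)"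
    "\<forall>y\<in>set xs. y \<noteq> u \<longrightarrow> outs y = 0"
    by (rule nested_struct[OF assms(2)])
  have e: "interp (E @ xs) = Imp (iin (E @ filter Z xs)) (oint u)"
    by (rule interp_app_in[OF assms(1) u(3)])
  show "IntCK (Imp (interp (E @ xs)) (Imp (iin E) (interp xs)))"
    unfolding e u(5) by (rule iin_curry) simp
  show "IntCK (Imp (Imp (iin E) (interp xs)) (interp (E @ xs)))"
    unfolding e u(5) by (rule iin_uncurry) simp
qed

lemma hole_out:
  assumes "seq_outs D = 1" "seq_outs xs = 0"
  shows "IntCK (Imp (interp (D @ xs)) (Imp (iin xs) (interp D)))"
    and "IntCK (Imp (Imp (iin xs) (interp D)) (interp (D @ xs)))"
proof -
  obtain u where u: "u \<in> set D" "outs u = 1" "find NZ D = Some u"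
    "set (filter Z D) = set D - {u}" "interp D = Imp (iin (filter Z D)) (oint u)"
    "\<forall>y\<in>set D. y \<noteq> u \<longrightarrow> outs y = 0"
    by (rule nested_struct[OF assms(1)])
  have e: "interp (D @ xs) = Imp (iin (filter Z D @ xs)) (oint u)"
    by (rule interp_app_out[OF u(3) assms(2)])
  show "IntCK (Imp (interp (D @ xs)) (Imp (iin xs) (interp D)))"
  proof -
    have 1: "IntCK (Imp (Imp (iin (filter Z D @ xs)) (oint u)) (Imp (iin xs) (Imp (iin (filter Z D)) (oint u))))"
      by (rule iin_curry) auto
    show ?thesis unfolding e u(5) by (rule 1)
  qed
  show "IntCK (Imp (Imp (iin xs) (interp D)) (interp (D @ xs)))"
  proof -
    have 1: "IntCK (Imp (Imp (iin xs) (Imp (iin (filter Z D)) (oint u))) (Imp (iin (filter Z D @ xs)) (oint u)))"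
      by (rule iin_uncurry) auto
    show ?thesis unfolding e u(5) by (rule 1)
  qed
qed


lemma imp_K: "IntCK A \<Longrightarrow> IntCK (Imp B A)"
  by (rule IntCK.MP[OF ax_K])

lemma imp_trans: "IntCK (Imp A B) \<Longrightarrow> IntCK (Imp B C) \<Longrightarrow> IntCK (Imp A C)"
  by (rule imp_thmI, rule thm_app, assumption, rule thm_app, assumption, rule hypI)

lemma imp_lift1: "IntCK (Imp P Q) \<Longrightarrow> IntCK (Imp (Imp A P) (Imp A Q))"
proof -
  assume h: "IntCK (Imp P Q)"
  have "ded {A, Imp A P} Q" by (rule thm_app[OF h dimpE[OF hypm[of "Imp A P"] hypm[of A]]]) simp_all
  then show ?thesis by (rule imp2_thmI[unfolded insert_commute[of A]])
qed

lemma imp_lift2: "IntCK (Imp P (Imp Q R)) \<Longrightarrow> IntCK (Imp (Imp A P) (Imp (Imp A Q) (Imp A R)))"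
proof -
  assume h: "IntCK (Imp P (Imp Q R))"
  let ?G = "{A, Imp A Q, Imp A P}"
  have "ded ?G R" by (rule thm_app2[OF h dimpE[OF hypm[of "Imp A P"] hypm[of A]] dimpE[OF hypm[of "Imp A Q"] hypm[of A]]]) simp_all
  then have "ded {Imp A Q, Imp A P} (Imp A R)" by (rule dimpI)
  then show ?thesis by (rule imp2_thmI)
qed

lemma imp2_congr:
  "IntCK (Imp P' P) \<Longrightarrow> IntCK (Imp Q' Q) \<Longrightarrow> IntCK (Imp R R') \<Longrightarrow> IntCK (Imp P (Imp Q R))
   \<Longrightarrow> IntCK (Imp P' (Imp Q' R'))"
proof -
  assume a: "IntCK (Imp P' P)" "IntCK (Imp Q' Q)" "IntCK (Imp R R')" "IntCK (Imp P (Imp Q R))"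
  have "ded {Q', P'} R'"
    by (rule thm_app[OF a(3) thm_app2[OF a(4) thm_app[OF a(1)] thm_app[OF a(2)]]], (rule hypm, simp)+)
  then show ?thesis by (rule imp2_thmI)
qed

lemma imp1_congr:
  "IntCK (Imp P' P) \<Longrightarrow> IntCK (Imp R R') \<Longrightarrow> IntCK (Imp P R) \<Longrightarrow> IntCK (Imp P' R')"
  using imp_trans by blast

lemma contract: "IntCK (Imp P (Imp P Q)) \<Longrightarrow> IntCK (Imp P Q)"
  by (rule imp_thmI, rule thm_app2, assumption, rule hypI, rule hypI)

lemma dup: "IntCK (Imp P Q) \<Longrightarrow> IntCK (Imp P (Imp P Q))"
  by (rule imp2_thmI, rule thm_app, assumption, rule hypm, simp)

section \<open>Output-hole contexts\<close>

lemma fill_outs_val: "seq_outs (fill C []) = a \<Longrightarrow> seq_outs D = b \<Longrightarrow> seq_outs (fill C D) = a + b"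
  using fill_outs[of C D] by simp


lemma fill_CComp_outs: "seq_outs (fill (CComp xs \<eta> C) []) = seq_outs (fill C []) + seq_outs xs"
  by simp

lemma ctx_out2:
  "seq_outs (fill C []) = 0 \<Longrightarrow> seq_outs D1 = 1 \<Longrightarrow> seq_outs D2 = 1 \<Longrightarrow> seq_outs D3 = 1 \<Longrightarrow>
   IntCK (Imp (interp D1) (Imp (interp D2) (interp D3))) \<Longrightarrow>
   IntCK (Imp (interp (fill C D1)) (Imp (interp (fill C D2)) (interp (fill C D3))))"
proof (induction C)
  case (Hole xs)
  have xs: "seq_outs xs = 0" using Hole.prems(1) by simp
  have "IntCK (Imp (interp (D1 @ xs)) (Imp (interp (D2 @ xs)) (interp (D3 @ xs))))"
    by (rule imp2_congr[OF hole_out(1)[OF Hole.prems(2) xs] hole_out(1)[OF Hole.prems(3) xs]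
          hole_out(2)[OF Hole.prems(4) xs] imp_lift2[OF Hole.prems(5)]])
  then show ?case by simp
next
  case (CComp xs \<eta> C)
  have xs: "seq_outs xs = 0" and c: "seq_outs (fill C []) = 0" using CComp.prems(1) by simp_all
  have f: "seq_outs (fill C D1) = 1" "seq_outs (fill C D2) = 1" "seq_outs (fill C D3) = 1"
    using fill_outs_val[OF c CComp.prems(2)] fill_outs_val[OF c CComp.prems(3)]
      fill_outs_val[OF c CComp.prems(4)] by simp_all
  have IH: "IntCK (Imp (interp (fill C D1)) (Imp (interp (fill C D2)) (interp (fill C D3))))"
    by (rule CComp.IH[OF c CComp.prems(2-5)])
  show ?case
    unfolding fill.simps interp_box[OF xs f(1)] interp_box[OF xs f(2)] interp_box[OF xs f(3)]
    by (rule imp_lift2[OF box2[OF IH]])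
qed

lemma ctx_out1:
  "seq_outs (fill C []) = 0 \<Longrightarrow> seq_outs D1 = 1 \<Longrightarrow> seq_outs D3 = 1 \<Longrightarrow>
   IntCK (Imp (interp D1) (interp D3)) \<Longrightarrow>
   IntCK (Imp (interp (fill C D1)) (interp (fill C D3)))"
  by (rule contract, rule ctx_out2, assumption+, rule dup)

lemma ctx_out0:
  "seq_outs (fill C []) = 0 \<Longrightarrow> seq_outs D = 1 \<Longrightarrow> IntCK (interp D) \<Longrightarrow> IntCK (interp (fill C D))"
proof (induction C)
  case (Hole xs)
  have xs: "seq_outs xs = 0" using Hole.prems(1) by simp
  show ?case using IntCK.MP[OF hole_out(2)[OF Hole.prems(2) xs] imp_K[OF Hole.prems(3)]] by simp
next
  case (CComp xs \<eta> C)
  have xs: "seq_outs xs = 0" and c: "seq_outs (fill C []) = 0" using CComp.prems(1) by simp_all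
  have f: "seq_outs (fill C D) = 1" using fill_outs_val[OF c CComp.prems(2)] by simp
  show ?case
    unfolding fill.simps interp_box[OF xs f]
    by (rule imp_K[OF box_nec[OF CComp.IH[OF c CComp.prems(2-3)]]])
qed

lemma pctx_or:
  "IntCK (Imp (iin D3) (Or (iin D1) (iin D2))) \<Longrightarrow>
   IntCK (Imp (iin (fill C D3)) (Or (iin (fill C D1)) (iin (fill C D2))))"
proof (induction C)
  case (Hole ys)
  let ?G = "{iin (D3 @ ys)}"
  have y: "ded ?G (iin ys)" and d: "ded ?G (iin D3)" using iin_append[of ?G D3 ys] hypI[of "iin (D3 @ ys)" "{}"] by simp_all
  have "ded ?G (Or (iin (D1 @ ys)) (iin (D2 @ ys)))"
  proof (rule dorE[OF thm_app[OF Hole.prems d]])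
    show "ded (insert (iin D1) ?G) (Or (iin (D1 @ ys)) (iin (D2 @ ys)))"
      by (rule dorI1, unfold iin_append, rule conjI, rule hypI, rule weak[OF y])
    show "ded (insert (iin D2) ?G) (Or (iin (D1 @ ys)) (iin (D2 @ ys)))"
      by (rule dorI2, unfold iin_append, rule conjI, rule hypI, rule weak[OF y])
  qed
  then show ?case by (simp only: fill.simps, rule imp_thmI)
next
  case (CComp ys \<eta> C)
  let ?G = "{And (iin ys) (CDia \<eta> (iin (fill C D3)))}"
  have y: "ded ?G (iin ys)" and d: "ded ?G (CDia \<eta> (iin (fill C D3)))"
    by (rule dandD1[OF hypI]) (rule dandD2[OF hypI])
  have o: "ded ?G (Or (CDia \<eta> (iin (fill C D1))) (CDia \<eta> (iin (fill C D2))))"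
    by (rule thm_app[OF dia_or[OF CComp.IH[OF CComp.prems]] d])
  have "ded ?G (Or (And (iin ys) (CDia \<eta> (iin (fill C D1)))) (And (iin ys) (CDia \<eta> (iin (fill C D2)))))"
  proof (rule dorE[OF o])
    show "ded (insert (CDia \<eta> (iin (fill C D1))) ?G) (Or (And (iin ys) (CDia \<eta> (iin (fill C D1)))) (And (iin ys) (CDia \<eta> (iin (fill C D2)))))"
      by (rule dorI1, rule dandI, rule weak[OF y], rule hypI)
    show "ded (insert (CDia \<eta> (iin (fill C D2))) ?G) (Or (And (iin ys) (CDia \<eta> (iin (fill C D1)))) (And (iin ys) (CDia \<eta> (iin (fill C D2)))))"
      by (rule dorI2, rule dandI, rule weak[OF y], rule hypI)
  qed
  then show ?case by (simp only: fill.simps iin.simps iitem.simps, rule imp_thmI)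
qed

lemma pctx_bot:
  "IntCK (Imp (iin D) Bot) \<Longrightarrow> IntCK (Imp (iin (fill C D)) Bot)"
proof (induction C)
  case (Hole ys)
  let ?G = "{iin (D @ ys)}"
  have d: "ded ?G (iin D)" using iin_append[of ?G D ys] hypI[of "iin (D @ ys)" "{}"] by simp
  have "ded ?G Bot" by (rule thm_app[OF Hole.prems d])
  then show ?case by (simp only: fill.simps, rule imp_thmI)
next
  case (CComp ys \<eta> C)
  let ?G = "{And (iin ys) (CDia \<eta> (iin (fill C D)))}"
  have d: "ded ?G (CDia \<eta> (iin (fill C D)))" by (rule dandD2[OF hypI])
  have "ded ?G Bot" by (rule thm_app[OF dia_bot[OF CComp.IH[OF CComp.prems]] d])
  then show ?case by (simp only: fill.simps iin.simps iitem.simps, rule imp_thmI)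
qed

lemma pctx_W:
  "seq_outs (fill C []) = 0 \<Longrightarrow> seq_outs D' = 1 \<Longrightarrow>
   IntCK (Imp (iin D) (Imp (interp D') (iin D2))) \<Longrightarrow>
   IntCK (Imp (iin (fill C D)) (Imp (interp (fill C D')) (iin (fill C D2))))"
proof (induction C)
  case (Hole ys)
  have ys: "seq_outs ys = 0" using Hole.prems(1) by simp
  let ?G = "{interp (D' @ ys), iin (D @ ys)}"
  have y: "ded ?G (iin ys)" and d: "ded ?G (iin D)" using iin_append[of ?G D ys] hypm[of "iin (D @ ys)" ?G] by simp_all
  have i: "ded ?G (interp D')"
    by (rule thm_app2[OF hole_out(1)[OF Hole.prems(2) ys] _ y], rule hypm, simp)
  have "ded ?G (iin D2)" by (rule thm_app2[OF Hole.prems(3) d i])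
  then have "ded ?G (iin (D2 @ ys))" using y iin_append[of ?G D2 ys] by simp
  then show ?case by (simp only: fill.simps, rule imp2_thmI)
next
  case (CComp ys \<eta> C)
  have ys: "seq_outs ys = 0" and c: "seq_outs (fill C []) = 0" using CComp.prems(1) by simp_all
  have f: "seq_outs (fill C D') = 1" using fill_outs_val[OF c CComp.prems(2)] by simp
  let ?G = "{Imp (iin ys) (CBox \<eta> (interp (fill C D'))), And (iin ys) (CDia \<eta> (iin (fill C D)))}"
  have y: "ded ?G (iin ys)" and d: "ded ?G (CDia \<eta> (iin (fill C D)))"
    by (rule dandD1[OF hypm], simp) (rule dandD2[OF hypm], simp)
  have b: "ded ?G (CBox \<eta> (interp (fill C D')))" by (rule dimpE[OF hypm y], simp)
  have "ded ?G (CDia \<eta> (iin (fill C D2)))"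
    by (rule thm_app2[OF dia_box[OF CComp.IH[OF c CComp.prems(2,3)]] d b])
  then have "ded ?G (And (iin ys) (CDia \<eta> (iin (fill C D2))))" by (rule dandI[OF y])
  then show ?case
    by (simp only: fill.simps iin.simps iitem.simps interp_box[OF ys f], rule imp2_thmI)
qed


section \<open>Input-hole contexts\<close>

lemma hole_in_or:
  assumes x: "seq_outs xs = 1" and e: "seq_outs E1 = 0" "seq_outs E2 = 0" "seq_outs E3 = 0"
    and h: "IntCK (Imp (iin E3) (Or (iin E1) (iin E2)))"
  shows "IntCK (Imp (interp (E1 @ xs)) (Imp (interp (E2 @ xs)) (interp (E3 @ xs))))"
proof -
  let ?G = "{interp (E2 @ xs), interp (E1 @ xs)}"
  let ?H = "insert (iin E3) ?G"
  have "ded ?H (interp xs)"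
  proof (rule dorE[OF thm_app[OF h hypI]])
    show "ded (insert (iin E1) ?H) (interp xs)"
      by (rule thm_app2[OF hole_in(1)[OF e(1) x]], rule hypm, simp, rule hypI)
    show "ded (insert (iin E2) ?H) (interp xs)"
      by (rule thm_app2[OF hole_in(1)[OF e(2) x]], rule hypm, simp, rule hypI)
  qed
  then have "ded ?G (Imp (iin E3) (interp xs))" by (rule dimpI)
  then have "ded ?G (interp (E3 @ xs))" by (rule thm_app[OF hole_in(2)[OF e(3) x]])
  then show ?thesis by (rule imp2_thmI)
qed

lemma hole_in_bot:
  assumes x: "seq_outs xs = 1" and e: "seq_outs E = 0" and h: "IntCK (Imp (iin E) Bot)"
  shows "IntCK (interp (E @ xs))"
proof -
  have "ded {} (Imp (iin E) (interp xs))"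
    by (rule dimpI, rule dbotE, rule thm_app[OF h hypI])
  then have "ded {} (interp (E @ xs))" by (rule thm_app[OF hole_in(2)[OF e x]])
  then show ?thesis by (rule ded_IntCK)
qed

lemma outs_split: "(a::nat) + b = 1 \<Longrightarrow> (b = 1 \<and> a = 0) \<or> (b = 0 \<and> a = 1)"
  by arith

lemma ctx_in_or:
  "seq_outs (fill C []) = 1 \<Longrightarrow> seq_outs D1 = 0 \<Longrightarrow> seq_outs D2 = 0 \<Longrightarrow> seq_outs D3 = 0 \<Longrightarrow>
   IntCK (Imp (iin D3) (Or (iin D1) (iin D2))) \<Longrightarrow>
   IntCK (Imp (interp (fill C D1)) (Imp (interp (fill C D2)) (interp (fill C D3))))"
proof (induction C)
  case (Hole xs)
  have xs: "seq_outs xs = 1" using Hole.prems(1) by simp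
  show ?case unfolding fill.simps by (rule hole_in_or[OF xs Hole.prems(2-5)])
next
  case (CComp xs \<eta> C)
  have s: "seq_outs (fill C []) + seq_outs xs = 1" using CComp.prems(1) by simp
  from outs_split[OF s] show ?case
  proof
    assume a: "seq_outs xs = 1 \<and> seq_outs (fill C []) = 0"
    have c0: "seq_outs (fill (CComp [] \<eta> C) []) = 0" using a by simp
    have e: "\<And>D. fill (CComp xs \<eta> C) D = fill (CComp [] \<eta> C) D @ xs" by simp
    have z: "\<And>D. seq_outs D = 0 \<Longrightarrow> seq_outs (fill (CComp [] \<eta> C) D) = 0"
      using fill_outs_val[OF c0] by simp
    show ?thesis unfolding e
      by (rule hole_in_or[OF conjunct1[OF a] z[OF CComp.prems(2)] z[OF CComp.prems(3)]
            z[OF CComp.prems(4)] pctx_or[OF CComp.prems(5)]])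
  next
    assume a: "seq_outs xs = 0 \<and> seq_outs (fill C []) = 1"
    have xs0: "seq_outs xs = 0" and c: "seq_outs (fill C []) = 1" using a by simp_all
    have f: "seq_outs (fill C D1) = 1" "seq_outs (fill C D2) = 1" "seq_outs (fill C D3) = 1"
      using fill_outs_val[OF c CComp.prems(2)] fill_outs_val[OF c CComp.prems(3)]
        fill_outs_val[OF c CComp.prems(4)] by simp_all
    show ?thesis
      unfolding fill.simps interp_box[OF xs0 f(1)] interp_box[OF xs0 f(2)] interp_box[OF xs0 f(3)]
      by (rule imp_lift2[OF box2[OF CComp.IH[OF c CComp.prems(2-5)]]])
  qed
qed

lemma ctx_in_bot:
  "seq_outs (fill C []) = 1 \<Longrightarrow> seq_outs D = 0 \<Longrightarrow> IntCK (Imp (iin D) Bot) \<Longrightarrow>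
   IntCK (interp (fill C D))"
proof (induction C)
  case (Hole xs)
  have xs: "seq_outs xs = 1" using Hole.prems(1) by simp
  show ?case unfolding fill.simps by (rule hole_in_bot[OF xs Hole.prems(2-3)])
next
  case (CComp xs \<eta> C)
  have s: "seq_outs (fill C []) + seq_outs xs = 1" using CComp.prems(1) by simp
  from outs_split[OF s] show ?case
  proof
    assume a: "seq_outs xs = 1 \<and> seq_outs (fill C []) = 0"
    have c0: "seq_outs (fill (CComp [] \<eta> C) []) = 0" using a by simp
    have e: "fill (CComp xs \<eta> C) D = fill (CComp [] \<eta> C) D @ xs" by simp
    have z: "seq_outs (fill (CComp [] \<eta> C) D) = 0"
      using fill_outs_val[OF c0 CComp.prems(2)] by simp
    show ?thesis unfolding e
      by (rule hole_in_bot[OF conjunct1[OF a] z pctx_bot[OF CComp.prems(3)]])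
  next
    assume a: "seq_outs xs = 0 \<and> seq_outs (fill C []) = 1"
    have xs0: "seq_outs xs = 0" and c: "seq_outs (fill C []) = 1" using a by simp_all
    have f: "seq_outs (fill C D) = 1" using fill_outs_val[OF c CComp.prems(2)] by simp
    show ?thesis
      unfolding fill.simps interp_box[OF xs0 f]
      by (rule imp_K[OF box_nec[OF CComp.IH[OF c CComp.prems(2-3)]]])
  qed
qed

lemma ctx_in1:
  "seq_outs (fill C []) = 1 \<Longrightarrow> seq_outs D1 = 0 \<Longrightarrow> seq_outs D3 = 0 \<Longrightarrow>
   IntCK (Imp (iin D3) (iin D1)) \<Longrightarrow>
   IntCK (Imp (interp (fill C D1)) (interp (fill C D3)))"
  by (rule contract, rule ctx_in_or, assumption+, rule imp_trans, assumption, rule ax_OrI1)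

section \<open>Strip lemma\<close>

lemma strip_set: "set (strip xs) = (\<Union>x\<in>set xs. set (strip_item x))"
  by (induction xs) auto

lemma strip_Out_lemma:
  "set S \<subseteq> set F \<Longrightarrow> IntCK (Imp (Imp (iin S) (Imp (iin F) Ob)) (Imp (iin F) Ob))"
proof -
  assume a: "set S \<subseteq> set F"
  let ?G = "{iin F, Imp (iin S) (Imp (iin F) Ob)}"
  have s: "ded ?G (iin S)" by (rule thm_app[OF iin_imp_sub[OF a]], rule hypm, simp)
  have "ded ?G Ob" by (rule dimpE[OF dimpE[OF hypm[of "Imp (iin S) (Imp (iin F) Ob)"] s] hypm[of "iin F"]], simp_all)
  then show ?thesis by (rule imp2_thmI)
qed

lemma strip_lemma:
  "seq_outs xs = 1 \<Longrightarrow> IntCK (Imp (Imp (iin (strip xs)) (interp xs)) (interp xs))"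
proof (induction "size_list size xs" arbitrary: xs rule: less_induct)
  case less
  obtain u where u: "u \<in> set xs" "outs u = 1" "find NZ xs = Some u"
    "set (filter Z xs) = set xs - {u}" "interp xs = Imp (iin (filter Z xs)) (oint u)"
    "\<forall>y\<in>set xs. y \<noteq> u \<longrightarrow> outs y = 0"
    by (rule nested_struct[OF less.prems])
  have others: "\<And>y. y \<in> set xs \<Longrightarrow> y \<noteq> u \<Longrightarrow> strip_item y = [y]"
    using u(6) strip_id(2) by blast
  have "set (strip xs) = (\<Union>x\<in>set xs. set (strip_item x))" by (rule strip_set)
  also have "\<dots> = (\<Union>x\<in>set xs - {u}. set (strip_item x)) \<union> set (strip_item u)" using u(1) by blast
  also have "(\<Union>x\<in>set xs - {u}. set (strip_item x)) = set xs - {u}" using others by auto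
  finally have sset: "set (strip xs) = set (filter Z xs) \<union> set (strip_item u)" using u(4) by simp
  show ?case
  proof (cases u)
    case (In \<phi>) then show ?thesis using u(2) by simp
  next
    case (Out \<chi>)
    then have "set (strip xs) \<subseteq> set (filter Z xs)" using sset by simp
    then show ?thesis unfolding u(5) by (rule strip_Out_lemma)
  next
    case (Comp \<eta> ys)
    have ys: "seq_outs ys = 1" using u(2) Comp by simp
    have sset': "set (strip xs) = set (filter Z xs) \<union> {Comp \<eta> (strip ys)}" using sset Comp by simp
    have ou: "oint u = CBox \<eta> (interp ys)" using Comp by (simp add: interp_def)
    have lt: "size_list size ys < size_list size xs"
      using size_list_mem_less[OF u(1), of size] Comp by simp
    have bm: "IntCK (Imp (CBox \<eta> (Imp (iin (strip ys)) (interp ys))) (CBox \<eta> (interp ys)))"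
      by (rule box_mono[OF less.hyps[OF lt ys]])
    let ?F = "filter Z xs"
    let ?I = "interp ys"
    let ?G = "{iin ?F, Imp (iin (strip xs)) (Imp (iin ?F) (CBox \<eta> ?I))}"
    let ?K = "insert (CDia \<eta> (iin (strip ys))) ?G"
    have sK: "ded ?K (iin (strip xs))"
    proof (rule iin_intro)
      fix x assume "x \<in> set (strip xs)"
      then have "x \<in> set ?F \<or> x = Comp \<eta> (strip ys)" using sset' by blast
      then show "ded ?K (iitem x)"
      proof
        assume h: "x \<in> set ?F" show ?thesis by (rule iin_elim[where L="?F", OF hypm]) (simp, fact h)
      next
        assume h: "x = Comp \<eta> (strip ys)" show ?thesis unfolding h by (simp add: hypI)
      qed
    qed
    have "ded ?K (CBox \<eta> ?I)"
      by (rule dimpE[OF dimpE[OF hypm[of "Imp (iin (strip xs)) (Imp (iin ?F) (CBox \<eta> ?I))"] sK] hypm[of "iin ?F"]], simp_all)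
    then have "ded ?G (Imp (CDia \<eta> (iin (strip ys))) (CBox \<eta> ?I))" by (rule dimpI)
    then have "ded ?G (CBox \<eta> (Imp (iin (strip ys)) ?I))" by (rule thm_app[OF CFS])
    then have "ded ?G (CBox \<eta> ?I)" by (rule thm_app[OF bm])
    then show ?thesis unfolding u(5) ou by (rule imp2_thmI)
  qed
qed

section \<open>The implication-left rule\<close>

lemma hole_crit:
  assumes x: "seq_outs xs = 1" and e: "seq_outs E = 0" and e2: "seq_outs E2 = 0"
    and e': "seq_outs E' = 1" and R: "IntCK (Imp (iin E) (Imp (interp E') (iin E2)))"
  shows "IntCK (Imp (interp (E' @ strip xs)) (Imp (interp (E2 @ xs)) (interp (E @ xs))))"
proof -
  have s0: "seq_outs (strip xs) = 0" by (rule strip_outs(1))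
  let ?G = "{interp (E2 @ xs), interp (E' @ strip xs)}"
  let ?H = "insert (iin E) ?G"
  let ?K = "insert (iin (strip xs)) ?H"
  have 1: "ded ?K (interp E')"
    by (rule thm_app2[OF hole_out(1)[OF e' s0]], (rule hypm, simp)+)
  have 2: "ded ?K (iin E2)"
    by (rule thm_app2[OF R _ 1], rule hypm, simp)
  have "ded ?K (interp xs)"
    by (rule thm_app2[OF hole_in(1)[OF e2 x] _ 2], rule hypm, simp)
  then have "ded ?H (Imp (iin (strip xs)) (interp xs))" by (rule dimpI)
  then have "ded ?H (interp xs)" by (rule thm_app[OF strip_lemma[OF x]])
  then have "ded ?G (Imp (iin E) (interp xs))" by (rule dimpI)
  then have "ded ?G (interp (E @ xs))" by (rule thm_app[OF hole_in(2)[OF e x]])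
  then show ?thesis by (rule imp2_thmI)
qed

lemma interp_InOut: "interp [In X, Out \<phi>] = Imp (And Top X) \<phi>"
proof -
  have "find NZ [In X, Out \<phi>] = Some (Out \<phi>)" by simp
  from interp_find[OF this] show ?thesis by simp
qed

lemma R0: "IntCK (Imp (iin [In (Imp \<phi> \<psi>)]) (Imp (interp [In (Imp \<phi> \<psi>), Out \<phi>]) (iin [In \<psi>])))"
proof -
  let ?G = "{Imp (And Top (Imp \<phi> \<psi>)) \<phi>, And Top (Imp \<phi> \<psi>)}"
  have x: "ded ?G (Imp \<phi> \<psi>)" by (rule dandD2[OF hypm], simp)
  have p: "ded ?G \<phi>" by (rule dimpE[OF hypm[of "Imp (And Top (Imp \<phi> \<psi>)) \<phi>"] hypm[of "And Top (Imp \<phi> \<psi>)"]], simp_all)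
  have "ded ?G (And Top \<psi>)" by (rule dandI[OF topI dimpE[OF x p]])
  then show ?thesis unfolding interp_InOut by (simp, rule imp2_thmI)
qed

lemma down_outs: "seq_outs (fill (down C) []) = 0"
  by (induction C) (simp_all add: strip_outs)

lemma ctx_impL:
  "seq_outs (fill C []) = 1 \<Longrightarrow>
   IntCK (Imp (interp (fill (down C) [In (Imp \<phi> \<psi>), Out \<phi>]))
              (Imp (interp (fill C [In \<psi>])) (interp (fill C [In (Imp \<phi> \<psi>)]))))"
proof (induction C)
  case (Hole xs)
  have xs: "seq_outs xs = 1" using Hole.prems(1) by simp
  show ?case
    by (simp only: fill.simps down.simps, rule hole_crit[OF xs _ _ _ R0], simp_all)
next
  case (CComp xs \<eta> C)
  have s: "seq_outs (fill C []) + seq_outs xs = 1" using CComp.prems(1) by simp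
  from outs_split[OF s] show ?case
  proof
    assume a: "seq_outs xs = 1 \<and> seq_outs (fill C []) = 0"
    have c: "seq_outs (fill C []) = 0" using a by simp
    have c0: "seq_outs (fill (CComp [] \<eta> C) []) = 0" using a by simp
    have e: "\<And>D. fill (CComp xs \<eta> C) D = fill (CComp [] \<eta> C) D @ xs" by simp
    have e': "\<And>D. fill (down (CComp xs \<eta> C)) D = fill (CComp [] \<eta> C) D @ strip xs"
      by (simp add: down_id[OF c])
    have z: "\<And>D n. seq_outs D = n \<Longrightarrow> seq_outs (fill (CComp [] \<eta> C) D) = n"
      using fill_outs_val[OF c0] by simp
    show ?thesis unfolding e e'
      by (rule hole_crit[OF conjunct1[OF a] z z z pctx_W[OF c0 _ R0]], simp_all)
  next
    assume a: "seq_outs xs = 0 \<and> seq_outs (fill C []) = 1"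
    have xs0: "seq_outs xs = 0" and c: "seq_outs (fill C []) = 1" using a by simp_all
    have sx: "strip xs = xs" using xs0 seq_outs0 strip_id(1) by blast
    have f: "seq_outs (fill C [In \<psi>]) = 1" "seq_outs (fill C [In (Imp \<phi> \<psi>)]) = 1"
      using fill_outs_val[OF c, of "[In \<psi>]"] fill_outs_val[OF c, of "[In (Imp \<phi> \<psi>)]"] by simp_all
    have f': "seq_outs (fill (down C) [In (Imp \<phi> \<psi>), Out \<phi>]) = 1"
      using fill_outs_val[OF down_outs, of "[In (Imp \<phi> \<psi>), Out \<phi>]"] by simp
    show ?thesis
      unfolding down.simps fill.simps sx interp_box[OF xs0 f(1)] interp_box[OF xs0 f(2)]
        interp_box[OF xs0 f']
      by (rule imp_lift2[OF box2[OF CComp.IH[OF c]]])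
  qed
qed


lemma interp_Out: "seq_outs xs = 0 \<Longrightarrow> interp (Out \<phi> # xs) = Imp (iin xs) \<phi>"
proof -
  assume a: "seq_outs xs = 0"
  have "find NZ (Out \<phi> # xs) = Some (Out \<phi>)" by simp
  from interp_find[OF this] show ?thesis using filter_zero[OF a] by simp
qed

lemma interp_Out1: "interp [Out \<phi>] = Imp Top \<phi>"
  using interp_Out[of "[]" \<phi>] by simp

lemma interp_InComp: "seq_outs \<Delta> = 1 \<Longrightarrow>
  interp [In A, Comp \<eta> \<Delta>] = Imp (And Top A) (CBox \<eta> (interp \<Delta>))"
proof -
  assume a: "seq_outs \<Delta> = 1"
  have "find NZ [In A, Comp \<eta> \<Delta>] = Some (Comp \<eta> \<Delta>)" using a by simp
  from interp_find[OF this] show ?thesis using a by (simp add: interp_def)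
qed

lemma interp_Comp1: "seq_outs F = 1 \<Longrightarrow> interp [Comp \<eta> F] = Imp Top (CBox \<eta> (interp F))"
  using interp_box[of "[]" F \<eta>] by simp

lemma top_imp: "IntCK (Imp (And Top A) B) \<Longrightarrow> IntCK (Imp A B)"
  by (rule imp_thmI, rule thm_app, assumption, rule dandI[OF topI hypI])

lemma f_init: "IntCK (interp [In (Atom p), Out (Atom p)])"
  unfolding interp_InOut by (rule imp_thmI, rule dandD2[OF hypI])

lemma f_botL: "IntCK (Imp (iin [In Bot]) Bot)"
  by (simp, rule imp_thmI, rule dandD2[OF hypI])

lemma f_andL: "IntCK (Imp (iin [In (And \<phi> \<psi>)]) (iin [In \<phi>, In \<psi>]))"
proof -
  let ?G = "{And Top (And \<phi> \<psi>)}"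
  have p: "ded ?G (And \<phi> \<psi>)" by (rule dandD2[OF hypI])
  have "ded ?G (And (And Top \<psi>) \<phi>)" by (rule dandI[OF dandI[OF topI dandD2[OF p]] dandD1[OF p]])
  then show ?thesis by (simp, rule imp_thmI)
qed

lemma f_andR: "IntCK (Imp (interp [Out \<phi>]) (Imp (interp [Out \<psi>]) (interp [Out (And \<phi> \<psi>)])))"
proof -
  let ?G = "{Top, Imp Top \<psi>, Imp Top \<phi>}"
  have "ded ?G (And \<phi> \<psi>)"
    by (rule dandI[OF dimpE[OF hypm[of "Imp Top \<phi>"] topI] dimpE[OF hypm[of "Imp Top \<psi>"] topI]], simp_all)
  then have "ded {Imp Top \<psi>, Imp Top \<phi>} (Imp Top (And \<phi> \<psi>))" by (rule dimpI)
  then show ?thesis unfolding interp_Out1 by (rule imp2_thmI)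
qed

lemma f_orL: "IntCK (Imp (iin [In (Or \<phi> \<psi>)]) (Or (iin [In \<phi>]) (iin [In \<psi>])))"
proof -
  let ?G = "{And Top (Or \<phi> \<psi>)}"
  have "ded ?G (Or (And Top \<phi>) (And Top \<psi>))"
    by (rule dorE[OF dandD2[OF hypI]], rule dorI1, rule dandI[OF topI hypI],
        rule dorI2, rule dandI[OF topI hypI])
  then show ?thesis by (simp, rule imp_thmI)
qed

lemma f_orR1: "IntCK (Imp (interp [Out \<phi>]) (interp [Out (Or \<phi> \<psi>)]))"
  unfolding interp_Out1
  by (rule imp_thmI, rule dimpI, rule dorI1, rule dimpE[OF hypm[of "Imp Top \<phi>"] topI], simp)

lemma f_orR2: "IntCK (Imp (interp [Out \<psi>]) (interp [Out (Or \<phi> \<psi>)]))"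
  unfolding interp_Out1
  by (rule imp_thmI, rule dimpI, rule dorI2, rule dimpE[OF hypm[of "Imp Top \<psi>"] topI], simp)

lemma f_impR: "IntCK (Imp (interp [In \<phi>, Out \<psi>]) (interp [Out (Imp \<phi> \<psi>)]))"
  unfolding interp_Out1 interp_InOut
  by (rule imp_thmI, rule dimpI, rule dimpI,
      rule dimpE[OF hypm[of "Imp (And Top \<phi>) \<psi>"] dandI[OF topI hypm[of \<phi>]]], simp_all)

lemma f_diaL: "IntCK (Imp (iin [In (CDia \<phi> \<psi>)]) (iin [Comp \<phi> [In \<psi>]]))"
proof -
  have m: "IntCK (Imp (CDia \<phi> \<psi>) (CDia \<phi> (And Top \<psi>)))"
    by (rule dia_mono, rule imp_thmI, rule dandI[OF topI hypI])
  show ?thesis by (simp, rule imp_thmI, rule dandI[OF topI thm_app[OF m dandD2[OF hypI]]])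
qed

lemma f_boxR: "IntCK (Imp (interp [Comp \<phi> [Out \<psi>]]) (interp [Out (CBox \<phi> \<psi>)]))"
proof -
  have m: "IntCK (Imp (CBox \<phi> (Imp Top \<psi>)) (CBox \<phi> \<psi>))"
    by (rule box_mono, rule imp_thmI, rule dimpE[OF hypI topI])
  show ?thesis unfolding interp_Comp1[of "[Out \<psi>]", simplified] interp_Out1
    by (rule imp_lift1[OF m])
qed

lemma f_boxL_in:
  assumes a: "IntCK (Imp \<phi> \<eta>)" "IntCK (Imp \<eta> \<phi>)"
  shows "IntCK (Imp (iin [In (CBox \<phi> \<psi>), Comp \<eta> \<Delta>]) (iin [In (CBox \<phi> \<psi>), Comp \<eta> (In \<psi> # \<Delta>)]))"
proof -
  let ?G = "{And (And Top (CDia \<eta> (iin \<Delta>))) (CBox \<phi> \<psi>)}"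
  have b: "ded ?G (CBox \<phi> \<psi>)" by (rule dandD2[OF hypI])
  have d: "ded ?G (CDia \<eta> (iin \<Delta>))" by (rule dandD2[OF dandD1[OF hypI]])
  have b': "ded ?G (CBox \<eta> \<psi>)" by (rule thm_app[OF box_RA[OF a] b])
  have "ded ?G (CDia \<eta> (And (iin \<Delta>) \<psi>))" by (rule thm_app[OF CW dandI[OF d b']])
  then have "ded ?G (And (And Top (CDia \<eta> (And (iin \<Delta>) \<psi>))) (CBox \<phi> \<psi>))"
    by (rule dandI[OF dandI[OF topI] b])
  then show ?thesis by (simp, rule imp_thmI)
qed

lemma f_boxL_out:
  assumes a: "IntCK (Imp \<phi> \<eta>)" "IntCK (Imp \<eta> \<phi>)" and d: "seq_outs \<Delta> = 1"
  shows "IntCK (Imp (interp [In (CBox \<phi> \<psi>), Comp \<eta> (In \<psi> # \<Delta>)]) (interp [In (CBox \<phi> \<psi>), Comp \<eta> \<Delta>]))"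
proof -
  have d': "seq_outs (In \<psi> # \<Delta>) = 1" using d by simp
  have h1: "IntCK (Imp (interp ([In \<psi>] @ \<Delta>)) (Imp (iin [In \<psi>]) (interp \<Delta>)))"
    by (rule hole_in(1)[OF _ d], simp)
  have h2: "IntCK (Imp (Imp (And Top \<psi>) (interp \<Delta>)) (Imp \<psi> (Imp (And Top \<psi>) (interp \<Delta>) )))"
    by (rule ax_K)
  have h3: "IntCK (Imp \<psi> (Imp (Imp (And Top \<psi>) (interp \<Delta>)) (interp \<Delta>)))"
    by (rule imp2_thmI, rule dimpE[OF hypm[of "Imp (And Top \<psi>) (interp \<Delta>)"] dandI[OF topI hypm[of \<psi>]]], simp_all)
  have h1': "IntCK (Imp (interp (In \<psi> # \<Delta>)) (Imp (And Top \<psi>) (interp \<Delta>)))" using h1 by simp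
  have in2: "IntCK (Imp \<psi> (Imp (interp (In \<psi> # \<Delta>)) (interp \<Delta>)))"
    by (rule imp2_thmI, rule thm_app2[OF h1' hypm[of "interp (In \<psi> # \<Delta>)"] dandI[OF topI hypm[of \<psi>]]], simp_all)
  have bb: "IntCK (Imp (CBox \<eta> \<psi>) (Imp (CBox \<eta> (interp (In \<psi> # \<Delta>))) (CBox \<eta> (interp \<Delta>))))"
    by (rule box2[OF in2])
  let ?G = "{And Top (CBox \<phi> \<psi>), Imp (And Top (CBox \<phi> \<psi>)) (CBox \<eta> (interp (In \<psi> # \<Delta>)))}"
  have b: "ded ?G (CBox \<eta> \<psi>)" by (rule thm_app[OF box_RA[OF a] dandD2[OF hypm[of "And Top (CBox \<phi> \<psi>)"]]], simp)
  have c: "ded ?G (CBox \<eta> (interp (In \<psi> # \<Delta>)))"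
    by (rule dimpE[OF hypm[of "Imp (And Top (CBox \<phi> \<psi>)) (CBox \<eta> (interp (In \<psi> # \<Delta>)))"] hypm[of "And Top (CBox \<phi> \<psi>)"]], simp_all)
  have "ded ?G (CBox \<eta> (interp \<Delta>))" by (rule thm_app2[OF bb b c])
  then show ?thesis unfolding interp_InComp[OF d] interp_InComp[OF d'] by (rule imp2_thmI)
qed

lemma f_diaR:
  assumes a: "IntCK (Imp \<phi> \<eta>)" "IntCK (Imp \<eta> \<phi>)" and d: "seq_outs \<Delta> = 0"
  shows "IntCK (Imp (interp [Comp \<eta> (Out \<psi> # \<Delta>)]) (interp [Out (CDia \<phi> \<psi>), Comp \<eta> \<Delta>]))"
proof -
  have d': "seq_outs (Out \<psi> # \<Delta>) = 1" using d by simp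
  have dc: "seq_outs [Comp \<eta> \<Delta>] = 0" using d by simp
  have m: "IntCK (Imp (CDia \<eta> (iin \<Delta>)) (Imp (CBox \<eta> (Imp (iin \<Delta>) \<psi>)) (CDia \<eta> \<psi>)))"
    by (rule dia_box, rule imp2_thmI, rule dimpE[OF hypm[of "Imp (iin \<Delta>) \<psi>"] hypm[of "iin \<Delta>"]], simp_all)
  let ?G = "{And Top (CDia \<eta> (iin \<Delta>)), Imp Top (CBox \<eta> (Imp (iin \<Delta>) \<psi>))}"
  have b: "ded ?G (CBox \<eta> (Imp (iin \<Delta>) \<psi>))"
    by (rule dimpE[OF hypm[of "Imp Top (CBox \<eta> (Imp (iin \<Delta>) \<psi>))"] topI], simp)
  have c: "ded ?G (CDia \<eta> (iin \<Delta>))" by (rule dandD2[OF hypm[of "And Top (CDia \<eta> (iin \<Delta>))"]], simp)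
  have "ded ?G (CDia \<phi> \<psi>)" by (rule thm_app[OF dia_RA[OF a] thm_app2[OF m c b]])
  then show ?thesis
    unfolding interp_Comp1[OF d'] interp_Out[OF d] interp_Out[OF dc] by (simp, rule imp2_thmI)
qed

lemma perm_out:
  assumes s: "set xs = set ys" and x: "seq_outs xs = 1" and y: "seq_outs ys = 1"
  shows "IntCK (Imp (interp xs) (interp ys))"
proof -
  obtain u where u: "u \<in> set xs" "outs u = 1" "find NZ xs = Some u"
    "set (filter Z xs) = set xs - {u}" "interp xs = Imp (iin (filter Z xs)) (oint u)"
    "\<forall>y\<in>set xs. y \<noteq> u \<longrightarrow> outs y = 0"
    by (rule nested_struct[OF x])
  obtain v where v: "v \<in> set ys" "outs v = 1" "find NZ ys = Some v"
    "set (filter Z ys) = set ys - {v}" "interp ys = Imp (iin (filter Z ys)) (oint v)"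
    "\<forall>y\<in>set ys. y \<noteq> v \<longrightarrow> outs y = 0"
    by (rule nested_struct[OF y])
  have "u = v"
  proof (rule ccontr)
    assume "u \<noteq> v"
    moreover have "u \<in> set ys" using u(1) s by simp
    ultimately have "outs u = 0" using v(6) by simp
    then show False using u(2) by simp
  qed
  then have fs: "set (filter Z xs) \<subseteq> set (filter Z ys)" using u(4) v(4) s by simp
  have iv: "interp ys = Imp (iin (filter Z ys)) (oint u)" using v(5) \<open>u = v\<close> by simp
  have "ded {iin (filter Z ys), Imp (iin (filter Z xs)) (oint u)} (oint u)"
    by (rule dimpE[OF hypm[of "Imp (iin (filter Z xs)) (oint u)"] thm_app[OF iin_imp_sub[OF fs] hypm[of "iin (filter Z ys)"]]], simp_all)
  then show ?thesis unfolding u(5) iv by (rule imp2_thmI)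
qed

lemma derivable_nested: "derivable \<Gamma> \<Longrightarrow> nested_seq \<Gamma>"
  by (induction rule: derivable.induct) auto

lemma ctx_outs: "nested_seq (fill C D) \<Longrightarrow> seq_outs (fill C []) + seq_outs D = 1"
  unfolding nested_seq_def using fill_outs[of C D] by simp

lemma soundness: "derivable \<Gamma> \<Longrightarrow> IntCK (interp \<Gamma>)"
proof (induction rule: derivable.induct)
  case (exch C xs ys)
  have n1: "seq_outs (fill C []) + seq_outs xs = 1"
    using ctx_outs[OF derivable_nested[OF exch.hyps(1)]] .
  have n2: "seq_outs (fill C []) + seq_outs ys = 1" using ctx_outs[OF exch.hyps(3)] .
  have st: "set xs = set ys" using mset_eq_setD[OF exch.hyps(2)] .
  from outs_split[OF n1] show ?case
  proof
    assume a: "seq_outs xs = 1 \<and> seq_outs (fill C []) = 0"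
    then have y: "seq_outs ys = 1" using n2 by simp
    show ?thesis
      by (rule IntCK.MP[OF ctx_out1[OF conjunct2[OF a] conjunct1[OF a] y perm_out[OF st conjunct1[OF a] y]] exch.IH])
  next
    assume a: "seq_outs xs = 0 \<and> seq_outs (fill C []) = 1"
    then have y: "seq_outs ys = 0" using n2 by simp
    have "set xs \<subseteq> set ys" using st by simp
    show ?thesis
      by (rule IntCK.MP[OF ctx_in1[OF conjunct2[OF a] conjunct1[OF a] y iin_imp_sub[OF \<open>set xs \<subseteq> set ys\<close>]] exch.IH])
  qed
next
  case (init C p)
  have c: "seq_outs (fill C []) = 0" using ctx_outs[OF init.hyps] by simp
  show ?case by (rule ctx_out0[OF c _ f_init], simp)
next
  case (botL C)
  have c: "seq_outs (fill C []) = 1" using ctx_outs[OF botL.hyps] by simp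
  show ?case by (rule ctx_in_bot[OF c _ f_botL], simp)
next
  case (andL C \<phi> \<psi>)
  have c: "seq_outs (fill C []) = 1" using ctx_outs[OF \<open>nested_seq (fill C [In (And \<phi> \<psi>)])\<close>] by simp
  show ?case by (rule IntCK.MP[OF ctx_in1[OF c _ _ f_andL] andL.IH], simp_all)
next
  case (andR C \<phi> \<psi>)
  have c: "seq_outs (fill C []) = 0" using ctx_outs[OF \<open>nested_seq (fill C [Out (And \<phi> \<psi>)])\<close>] by simp
  show ?case by (rule IntCK.MP[OF IntCK.MP[OF ctx_out2[OF c _ _ _ f_andR] andR.IH(1)] andR.IH(2)], simp_all)
next
  case (orL C \<phi> \<psi>)
  have c: "seq_outs (fill C []) = 1" using ctx_outs[OF \<open>nested_seq (fill C [In (Or \<phi> \<psi>)])\<close>] by simp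
  show ?case by (rule IntCK.MP[OF IntCK.MP[OF ctx_in_or[OF c _ _ _ f_orL] orL.IH(1)] orL.IH(2)], simp_all)
next
  case (orR1 C \<phi> \<psi>)
  have c: "seq_outs (fill C []) = 0" using ctx_outs[OF \<open>nested_seq (fill C [Out (Or \<phi> \<psi>)])\<close>] by simp
  show ?case by (rule IntCK.MP[OF ctx_out1[OF c _ _ f_orR1] orR1.IH], simp_all)
next
  case (orR2 C \<psi> \<phi>)
  have c: "seq_outs (fill C []) = 0" using ctx_outs[OF \<open>nested_seq (fill C [Out (Or \<phi> \<psi>)])\<close>] by simp
  show ?case by (rule IntCK.MP[OF ctx_out1[OF c _ _ f_orR2] orR2.IH], simp_all)
next
  case (impL C \<phi> \<psi>)
  have c: "seq_outs (fill C []) = 1" using ctx_outs[OF \<open>nested_seq (fill C [In (Imp \<phi> \<psi>)])\<close>] by simp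
  show ?case by (rule IntCK.MP[OF IntCK.MP[OF ctx_impL[OF c] impL.IH(1)] impL.IH(2)])
next
  case (impR C \<phi> \<psi>)
  have c: "seq_outs (fill C []) = 0" using ctx_outs[OF \<open>nested_seq (fill C [Out (Imp \<phi> \<psi>)])\<close>] by simp
  show ?case by (rule IntCK.MP[OF ctx_out1[OF c _ _ f_impR] impR.IH], simp_all)
next
  case (boxL \<phi> \<eta> C \<psi> \<Delta>)
  have a1: "IntCK (Imp \<phi> \<eta>)" using top_imp boxL.IH(1) unfolding interp_InOut by blast
  have a2: "IntCK (Imp \<eta> \<phi>)" using top_imp boxL.IH(2) unfolding interp_InOut by blast
  have n: "seq_outs (fill C []) + seq_outs \<Delta> = 1" using ctx_outs[OF \<open>nested_seq (fill C [In (CBox \<phi> \<psi>), Comp \<eta> \<Delta>])\<close>] by simp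
  from outs_split[OF n] show ?case
  proof
    assume a: "seq_outs \<Delta> = 1 \<and> seq_outs (fill C []) = 0"
    show ?thesis
      by (rule IntCK.MP[OF ctx_out1[OF conjunct2[OF a] _ _ f_boxL_out[OF a1 a2 conjunct1[OF a]]] boxL.IH(3)],
          use a in simp_all)
  next
    assume a: "seq_outs \<Delta> = 0 \<and> seq_outs (fill C []) = 1"
    show ?thesis
      by (rule IntCK.MP[OF ctx_in1[OF conjunct2[OF a] _ _ f_boxL_in[OF a1 a2]] boxL.IH(3)],
          use a in simp_all)
  qed
next
  case (boxR C \<phi> \<psi>)
  have c: "seq_outs (fill C []) = 0" using ctx_outs[OF \<open>nested_seq (fill C [Out (CBox \<phi> \<psi>)])\<close>] by simp
  show ?case by (rule IntCK.MP[OF ctx_out1[OF c _ _ f_boxR] boxR.IH], simp_all)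
next
  case (diaL C \<phi> \<psi>)
  have c: "seq_outs (fill C []) = 1" using ctx_outs[OF \<open>nested_seq (fill C [In (CDia \<phi> \<psi>)])\<close>] by simp
  show ?case by (rule IntCK.MP[OF ctx_in1[OF c _ _ f_diaL] diaL.IH], simp_all)
next
  case (diaR \<phi> \<eta> C \<psi> \<Delta>)
  have a1: "IntCK (Imp \<phi> \<eta>)" using top_imp diaR.IH(1) unfolding interp_InOut by blast
  have a2: "IntCK (Imp \<eta> \<phi>)" using top_imp diaR.IH(2) unfolding interp_InOut by blast
  have n: "seq_outs (fill C []) + (1 + seq_outs \<Delta>) = 1" using ctx_outs[OF \<open>nested_seq (fill C [Out (CDia \<phi> \<psi>), Comp \<eta> \<Delta>])\<close>] by simp
  then have c: "seq_outs (fill C []) = 0" and d: "seq_outs \<Delta> = 0" by simp_all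
  show ?case
    by (rule IntCK.MP[OF ctx_out1[OF c _ _ f_diaR[OF a1 a2 d]] diaR.IH(3)], use d in simp_all)
qed


theorem theorem1:
  assumes "nested_seq \<Gamma>"
    and "derivable \<Gamma>"
  shows "IntCK (interp \<Gamma>)"
  using soundness[OF assms(2)] .

end
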